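(* The operad morphism $\gamma:\operatorname{Arb}\to\operatorname{Zinb}$ is injective (i.e. $\gamma:\operatorname{Arb}(I)\to\operatorname{Zinb}(I)$ is injective for every finite set $I$), and so is the composite morphism $\kappa=\iota\circ\gamma:\operatorname{Arb}\to\operatorname{Mould}$.
   Context: A shrub $P$ on a finite set $I$ is a set $E$ of edges (unordered pairs of distinct elements of $I$) with a height function $h_P:I\to\mathbb{N}$; $j$ covers $i$ if $\{i,j\}\in E$ and $h_P(j)=h_P(i)+1$. Axioms: (1) edges join vertices whose heights differ by $1$; (2) every vertex of positive height covers some vertex; (3) no four distinct $a,b,c,d$ with $a$ covering $b$ and $c$, $c$ covering $d$, $\{b,d\}\notin E$; (4) no five distinct $a,b,c,d,e$ with $a$ covering $c,d$, $b$ covering $d,e$, $\{a,e\}\notin E$, $\{b,c\}\notin E$. $\operatorname{Arb}(I)$ is the set of shrubs on $I$; it is a set-theoretic operad with composition $P\circ_i P'$ = the shrub on $(I\setminus\{i\})\sqcup I'$ with height $h_P$ on $I\setminus\{i\}$, $h_{P'}+h_P(i)$ on $I'$, and edges those of $P$ not containing $i$, those of $P'$, and all $\{j,k\}$ with $j$ adjacent to $i$ in $P$ and $k$ of height $0$ in $P'$. $\operatorname{Zinb}(I)$ is the $\mathbb{Q}$-vector space with basis the total orders on $I$, with the Zinbiel operad structure (composition $\pi\circ_i\sigma$ = sum of the total orders extending $\preceq$, where $a\preceq b$ iff ($a,b\in I$, $a\le_\pi b$) or ($a,b\in I'$, $a\le_\sigma b$) or ($a\in I$, $b\in I'$, $a\le_\pi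 i$)). $\gamma:\operatorname{Arb}\to\operatorname{Zinb}$ is the operad morphism sending a shrub $P$ to the sum of all total orders $<$ on $I$ compatible with $P$, i.e. such that every vertex $i$ of positive height covers some $j$ with $j<i$. $\operatorname{Mould}(I)=\mathbb{Q}(u_i:i\in I)$ with $f\circ_i g=(\sum_{j\in J}u_j)\,g\,f|_{u_i=\sum_{j\in J}u_j}$, and $\iota:\operatorname{Zinb}\to\operatorname{Mould}$ is the (linear, injective) operad morphism sending a total order $\pi$ on $I$ to $1/\prod_{i\in I}\sum_{j\ge_\pi i}u_j$. *)

theory Defs
  imports Complex_Main "HOL-Library.Function_Algebras"
begin

definition covers :: "'a set set \<Rightarrow> ('a \<Rightarrow> nat) \<Rightarrow> 'a \<Rightarrow> 'a \<Rightarrow> bool" where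
  "covers E h j i \<longleftrightarrow> {i, j} \<in> E \<and> h j = h i + 1"

definition shrub :: "'a set \<Rightarrow> 'a set set \<Rightarrow> ('a \<Rightarrow> nat) \<Rightarrow> bool" where
  "shrub I E h \<longleftrightarrow>
     finite I \<and>
     (\<forall>e\<in>E. \<exists>a b. e = {a, b} \<and> a \<noteq> b \<and> a \<in> I \<and> b \<in> I) \<and>
     (\<forall>a b. {a, b} \<in> E \<longrightarrow> h a = h b + 1 \<or> h b = h a + 1) \<and>
     (\<forall>i\<in>I. 0 < h i \<longrightarrow> (\<exists>j\<in>I. covers E h i j)) \<and>
     \<not> (\<exists>a\<in>I. \<exists>b\<in>I. \<exists>c\<in>I. \<exists>d\<in>I. distinct [a, b, c, d] \<and>
           covers E h a b \<and> covers E h a c \<and> covers E h c d \<and> {b, d} \<notin> E) \<and>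
     \<not> (\<exists>a\<in>I. \<exists>b\<in>I. \<exists>c\<in>I. \<exists>d\<in>I. \<exists>e\<in>I. distinct [a, b, c, d, e] \<and>
           covers E h a c \<and> covers E h a d \<and> covers E h b d \<and> covers E h b e \<and>
           {a, e} \<notin> E \<and> {b, c} \<notin> E)"

text \<open>Total orders on I, represented as lists enumerating I in increasing order.\<close>

definition total_orders :: "'a set \<Rightarrow> 'a list set" where
  "total_orders I = {xs. distinct xs \<and> set xs = I}"

definition ord_le :: "'a list \<Rightarrow> 'a \<Rightarrow> 'a \<Rightarrow> bool" where
  "ord_le xs a b \<longleftrightarrow> (\<exists>p q. p \<le> q \<and> q < length xs \<and> xs ! p = a \<and> xs ! q = b)"

definition ord_less :: "'a list \<Rightarrow> 'a \<Rightarrow> 'a \<Rightarrow> bool" where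
  "ord_less xs a b \<longleftrightarrow> (\<exists>p q. p < q \<and> q < length xs \<and> xs ! p = a \<and> xs ! q = b)"

definition compatible :: "'a set \<Rightarrow> 'a set set \<Rightarrow> ('a \<Rightarrow> nat) \<Rightarrow> 'a list \<Rightarrow> bool" where
  "compatible I E h xs \<longleftrightarrow>
     (\<forall>i\<in>I. 0 < h i \<longrightarrow> (\<exists>j\<in>I. covers E h i j \<and> ord_less xs j i))"

text \<open>Elements of Zinb(I): Q-linear combinations of total orders on I, as coefficient
  functions (the basis vector of a total order is its indicator).\<close>

type_synonym 'a zinb = "'a list \<Rightarrow> rat"

definition basis_vec :: "'a list \<Rightarrow> 'a zinb" where
  "basis_vec xs = (\<lambda>ys. if ys = xs then 1 else 0)"

definition gamma :: "'a set \<Rightarrow> 'a set set \<Rightarrow> ('a \<Rightarrow> nat) \<Rightarrow> 'a zinb" where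
  "gamma I E h = (\<Sum>xs\<in>{xs\<in>total_orders I. compatible I E h xs}. basis_vec xs)"

text \<open>Elements of Mould(I) = Q(u_i : i in I): a rational function is represented by its
  values at points u with all coordinates positive (where all the denominators below
  are nonzero); two rational functions are equal iff they agree on these points.\<close>

definition iota_basis :: "'a set \<Rightarrow> 'a list \<Rightarrow> ('a \<Rightarrow> rat) \<Rightarrow> rat" where
  "iota_basis I xs u = 1 / (\<Prod>i\<in>I. \<Sum>j\<in>{j\<in>I. ord_le xs i j}. u j)"

definition iota :: "'a set \<Rightarrow> 'a zinb \<Rightarrow> ('a \<Rightarrow> rat) \<Rightarrow> rat" where
  "iota I z u = (\<Sum>xs\<in>total_orders I. z xs * iota_basis I xs u)"

definition kappa :: "'a set \<Rightarrow> 'a set set \<Rightarrow> ('a \<Rightarrow> nat) \<Rightarrow> ('a \<Rightarrow> rat) \<Rightarrow> rat" where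
  "kappa I E h = iota I (gamma I E h)"

end

theory Submission
  imports Defs
begin


definition pc :: "'a set set \<Rightarrow> ('a \<Rightarrow> nat) \<Rightarrow> 'a list \<Rightarrow> bool" where
  "pc E h xs \<longleftrightarrow> (\<forall>q<length xs. 0 < h (xs!q) \<longrightarrow> (\<exists>p<q. covers E h (xs!q) (xs!p)))"

lemma pc_snoc: "pc E h (xs@[x]) \<longleftrightarrow> pc E h xs \<and> (0 < h x \<longrightarrow> (\<exists>y\<in>set xs. covers E h x y))"
proof
  assume a: "pc E h (xs@[x])"
  have "pc E h xs" unfolding pc_def
  proof (intro allI impI)
    fix q assume q: "q < length xs" "0 < h (xs!q)"
    then obtain p where "p<q" "covers E h ((xs@[x])!q) ((xs@[x])!p)"
      using a unfolding pc_def by (metis length_append_singleton less_SucI nth_append)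
    then show "\<exists>p<q. covers E h (xs!q) (xs!p)" using q by (metis nth_append order.strict_trans)
  qed
  moreover have "0 < h x \<longrightarrow> (\<exists>y\<in>set xs. covers E h x y)"
  proof
    assume "0 < h x"
    then obtain p where "p < length xs" "covers E h ((xs@[x])!length xs) ((xs@[x])!p)"
      using a unfolding pc_def by (metis length_append_singleton lessI nth_append_length)
    then show "\<exists>y\<in>set xs. covers E h x y" by (metis nth_append nth_append_length nth_mem)
  qed
  ultimately show "pc E h xs \<and> (0 < h x \<longrightarrow> (\<exists>y\<in>set xs. covers E h x y))" by blast
next
  assume a: "pc E h xs \<and> (0 < h x \<longrightarrow> (\<exists>y\<in>set xs. covers E h x y))"
  show "pc E h (xs@[x])" unfolding pc_def
  proof (intro allI impI)
    fix q assume q: "q < length (xs@[x])" "0 < h ((xs@[x])!q)"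
    show "\<exists>p<q. covers E h ((xs @ [x]) ! q) ((xs @ [x]) ! p)"
    proof (cases "q < length xs")
      case True
      then show ?thesis using a q unfolding pc_def by (metis nth_append order.strict_trans)
    next
      case False
      then have "q = length xs" using q by simp
      then obtain y where "y\<in>set xs" "covers E h x y" using a q by auto
      then obtain p where "p < length xs" "xs!p = y" by (metis in_set_conv_nth)
      then show ?thesis using \<open>q = length xs\<close> \<open>covers E h x y\<close> by (metis nth_append nth_append_length)
    qed
  qed
qed

lemma pc_height: "pc E h xs \<Longrightarrow> q < length xs \<Longrightarrow> h (xs!q) \<le> q"
proof (induction q rule: less_induct)
  case (less q)
  show ?case
  proof (cases "h (xs!q) = 0")
    case False
    then obtain p where "p<q" "covers E h (xs!q) (xs!p)" using less.prems unfolding pc_def by blast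
    then have "h (xs!q) = h (xs!p) + 1" "h (xs!p) \<le> p" using less by (auto simp: covers_def)
    then show ?thesis using \<open>p<q\<close> by linarith
  qed simp
qed

lemma compat_iff:
  assumes "distinct xs" "set xs = I"
  shows "compatible I E h xs \<longleftrightarrow> pc E h xs"
proof
  assume c: "compatible I E h xs"
  show "pc E h xs" unfolding pc_def
  proof (intro allI impI)
    fix q assume q: "q < length xs" "0 < h (xs!q)"
    then have "xs!q \<in> I" using assms by auto
    then obtain j where j: "covers E h (xs!q) j" "ord_less xs j (xs!q)" using c q unfolding compatible_def by blast
    then obtain p q' where "p < q'" "q' < length xs" "xs!p = j" "xs!q' = xs!q" unfolding ord_less_def by blast
    then have "q' = q" using assms q nth_eq_iff_index_eq by blast
    then show "\<exists>p<q. covers E h (xs!q) (xs!p)" using j \<open>p<q'\<close> \<open>xs!p = j\<close> by blast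
  qed
next
  assume c: "pc E h xs"
  show "compatible I E h xs" unfolding compatible_def
  proof (intro ballI impI)
    fix i assume i: "i \<in> I" "0 < h i"
    then obtain q where q: "q < length xs" "xs!q = i" using assms by (metis in_set_conv_nth)
    then obtain p where "p<q" "covers E h i (xs!p)" using c i unfolding pc_def by blast
    moreover have "xs!p \<in> I" using \<open>p<q\<close> q assms by auto
    ultimately show "\<exists>j\<in>I. covers E h i j \<and> ord_less xs j i" using q unfolding ord_less_def by blast
  qed
qed

lemma shrub_finite: "shrub I E h \<Longrightarrow> finite I" by (simp add: shrub_def)

lemma shrub_down: "shrub I E h \<Longrightarrow> i \<in> I \<Longrightarrow> 0 < h i \<Longrightarrow> \<exists>j\<in>I. covers E h i j"
  by (simp add: shrub_def)

lemma shrub_edge: "shrub I E h \<Longrightarrow> e \<in> E \<Longrightarrow> \<exists>a b. e = {a, b} \<and> a \<noteq> b \<and> a \<in> I \<and> b \<in> I"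
  unfolding shrub_def by blast

lemma shrub_ht: "shrub I E h \<Longrightarrow> {a,b} \<in> E \<Longrightarrow> h a = h b + 1 \<or> h b = h a + 1"
  unfolding shrub_def by blast

lemma extend:
  assumes s: "shrub I E h"
  shows "distinct xs \<Longrightarrow> set xs \<subseteq> I \<Longrightarrow> pc E h xs \<Longrightarrow>
    \<exists>ys. distinct (xs@ys) \<and> set (xs@ys) = I \<and> pc E h (xs@ys)"
proof (induction "card (I - set xs)" arbitrary: xs rule: less_induct)
  case less
  have fin: "finite I" using s shrub_finite by blast
  show ?case
  proof (cases "I - set xs = {}")
    case True
    then show ?thesis using less.prems by (intro exI[of _ "[]"]) auto
  next
    case False
    define R where "R = I - set xs"
    have "finite R" "R \<noteq> {}" using fin False R_def by auto
    then obtain x where x: "x \<in> R" "h x = Min (h ` R)" by (metis (mono_tags, lifting) Min_in finite_imageI image_iff image_is_empty)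
    have xmin: "\<forall>z\<in>R. h x \<le> h z" using x \<open>finite R\<close> by auto
    have pc2: "pc E h (xs@[x])" unfolding pc_snoc
    proof (intro conjI impI)
      show "pc E h xs" by (rule less.prems)
      assume "0 < h x"
      then obtain j where j: "j\<in>I" "covers E h x j" using shrub_down[OF s] x R_def by blast
      then have "h j < h x" by (simp add: covers_def)
      then have "j \<notin> R" using xmin by force
      then show "\<exists>y\<in>set xs. covers E h x y" using j R_def by blast
    qed
    have "card (I - set (xs@[x])) < card (I - set xs)"
      using x R_def fin by (intro psubset_card_mono) auto
    then obtain ys where "distinct ((xs@[x])@ys)" "set ((xs@[x])@ys) = I" "pc E h ((xs@[x])@ys)"
      using less.hyps[OF _ _ _ pc2] less.prems x R_def by auto
    then show ?thesis by (intro exI[of _ "x#ys"]) auto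
  qed
qed

lemma chain:
  assumes s: "shrub I E h"
  shows "j \<in> I \<Longrightarrow> \<exists>c. distinct c \<and> set c \<subseteq> I \<and> pc E h c \<and> length c = h j + 1 \<and> c ! h j = j"
proof (induction "h j" arbitrary: j)
  case 0
  then show ?case by (intro exI[of _ "[j]"]) (auto simp: pc_def)
next
  case (Suc n)
  then obtain k where k: "k \<in> I" "covers E h j k" using shrub_down[OF s] by force
  then have hk: "h k = n" using Suc by (simp add: covers_def)
  then obtain c where c: "distinct c" "set c \<subseteq> I" "pc E h c" "length c = n + 1" "c ! n = k"
    using Suc k by metis
  have "j \<notin> set c"
  proof
    assume "j \<in> set c"
    then obtain q where "q < length c" "c!q = j" by (metis in_set_conv_nth)
    then show False using pc_height[OF c(3)] c(4) Suc(2) by fastforce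
  qed
  moreover have "pc E h (c@[j])" unfolding pc_snoc using c k
    by (metis add.commute lessI nth_mem plus_1_eq_Suc)
  ultimately show ?case using c Suc by (intro exI[of _ "c@[j]"]) (auto simp: nth_append)
qed

lemma exists_pos:
  assumes s: "shrub I E h" and j: "j \<in> I"
  shows "\<exists>xs. distinct xs \<and> set xs = I \<and> pc E h xs \<and> h j < length xs \<and> xs ! h j = j"
proof -
  obtain c where c: "distinct c" "set c \<subseteq> I" "pc E h c" "length c = h j + 1" "c ! h j = j"
    using chain[OF s j] by blast
  obtain ys where "distinct (c@ys)" "set (c@ys) = I" "pc E h (c@ys)" using extend[OF s c(1-3)] by blast
  moreover have "h j < length (c@ys)" using c(4) by simp
  moreover have "(c@ys) ! h j = j" using c(4,5) by (simp add: nth_append)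
  ultimately show ?thesis by blast
qed

lemma exists_pos2:
  assumes s: "shrub I E h" and j: "j \<in> I" and cov: "covers E h i j"
  shows "\<exists>xs. distinct xs \<and> set xs = I \<and> pc E h xs \<and> Suc (h j) < length xs \<and> xs ! h j = j \<and> xs ! Suc (h j) = i"
proof -
  obtain c where c: "distinct c" "set c \<subseteq> I" "pc E h c" "length c = h j + 1" "c ! h j = j"
    using chain[OF s j] by blast
  have hi: "h i = h j + 1" using cov by (simp add: covers_def)
  have iI: "i \<in> I"
  proof -
    have "{j, i} \<in> E" using cov by (simp add: covers_def)
    then obtain a b where "{j,i} = {a,b}" "a \<in> I" "b \<in> I" using shrub_edge[OF s] by blast
    then show ?thesis by (auto simp: doubleton_eq_iff)
  qed
  have "i \<notin> set c"
  proof
    assume "i \<in> set c"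
    then obtain q where "q < length c" "c!q = i" by (metis in_set_conv_nth)
    then show False using pc_height[OF c(3)] c(4) hi by fastforce
  qed
  moreover have "pc E h (c@[i])" unfolding pc_snoc using c cov
    by (metis lessI nth_mem Suc_eq_plus1)
  ultimately have c2: "distinct (c@[i])" "set (c@[i]) \<subseteq> I" "pc E h (c@[i])" using c iI by auto
  obtain ys where "distinct ((c@[i])@ys)" "set ((c@[i])@ys) = I" "pc E h ((c@[i])@ys)" using extend[OF s c2] by blast
  moreover have "Suc (h j) < length ((c@[i])@ys)" using c(4) by simp
  moreover have "((c@[i])@ys) ! h j = j" using c(4,5) by (simp add: nth_append)
  moreover have "((c@[i])@ys) ! Suc (h j) = i" using c(4) by (simp add: nth_append)
  ultimately show ?thesis by blast
qed

lemma heights_le: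
  assumes s: "shrub I E h" and C: "\<forall>xs. distinct xs \<and> set xs = I \<longrightarrow> (pc E h xs \<longleftrightarrow> pc E' h' xs)"
    and x: "x \<in> I"
  shows "h' x \<le> h x"
proof -
  obtain xs where xs: "distinct xs" "set xs = I" "pc E h xs" "h x < length xs" "xs ! h x = x"
    using exists_pos[OF s x] by blast
  then have "pc E' h' xs" using C by blast
  then show ?thesis using pc_height xs by metis
qed

lemma edges_sub:
  assumes s: "shrub I E h" and s': "shrub I E' h'"
    and C: "\<forall>xs. distinct xs \<and> set xs = I \<longrightarrow> (pc E h xs \<longleftrightarrow> pc E' h' xs)"
    and H: "\<forall>i\<in>I. h i = h' i"
  shows "E \<subseteq> E'"
proof
  fix e assume e: "e \<in> E"
  then obtain a b where ab: "e = {a,b}" "a \<noteq> b" "a \<in> I" "b \<in> I" using shrub_edge[OF s] by blast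
  have "h a = h b + 1 \<or> h b = h a + 1" using shrub_ht[OF s] e ab by blast
  then obtain x y where xy: "e = {y, x}" "x \<in> I" "y \<in> I" "h x = h y + 1"
    using ab by (metis insert_commute)
  then have cov: "covers E h x y" using e by (simp add: covers_def)
  obtain xs where xs: "distinct xs" "set xs = I" "pc E h xs" "Suc (h y) < length xs" "xs ! h y = y" "xs ! Suc (h y) = x"
    using exists_pos2[OF s xy(3) cov] by blast
  then have pc': "pc E' h' xs" using C by blast
  have "0 < h' x" using H xy by auto
  then obtain p where p: "p < Suc (h y)" "covers E' h' x (xs!p)" using pc' xs unfolding pc_def by metis
  have "xs!p \<in> I" using p xs by auto
  have "h' (xs!p) = h y" using p(2) H xy by (simp add: covers_def)
  moreover have "h' (xs!p) \<le> p" using pc_height[OF pc'] p xs by simp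
  ultimately have "p = h y" using p by simp
  then show "e \<in> E'" using p xs xy by (simp add: covers_def)
qed

lemma part1:
  assumes s: "shrub I E h" and s': "shrub I E' h'"
    and C: "\<forall>xs. distinct xs \<and> set xs = I \<longrightarrow> (pc E h xs \<longleftrightarrow> pc E' h' xs)"
  shows "E = E' \<and> (\<forall>i\<in>I. h i = h' i)"
proof -
  have H: "\<forall>i\<in>I. h i = h' i" using heights_le[OF s C] heights_le[OF s'] C by (metis antisym)
  have "E \<subseteq> E'" using edges_sub[OF s s' C H] .
  moreover have "E' \<subseteq> E" using edges_sub[OF s' s] C H by metis
  ultimately show ?thesis using H by blast
qed



lemma finite_T: "finite I \<Longrightarrow> finite (total_orders I)"
proof -
  assume f: "finite I"
  have "total_orders I \<subseteq> {xs. set xs \<subseteq> I \<and> length xs \<le> card I}"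
    unfolding total_orders_def using distinct_card by fastforce
  then show ?thesis using finite_lists_length_le[OF f] finite_subset by blast
qed

lemma sum_fun_apply: "(\<Sum>a\<in>A. f a) x = (\<Sum>a\<in>A. f a x)"
  by (induction A rule: infinite_finite_induct) auto

lemma gamma_apply: "finite I \<Longrightarrow>
  gamma I E h ys = (if ys \<in> total_orders I \<and> compatible I E h ys then 1 else 0)"
proof -
  assume f: "finite I"
  have fin: "finite {xs\<in>total_orders I. compatible I E h xs}" using finite_T[OF f] by simp
  have "gamma I E h ys = (\<Sum>xs\<in>{xs\<in>total_orders I. compatible I E h xs}. if ys = xs then 1 else 0)"
    unfolding gamma_def sum_fun_apply basis_vec_def by simp
  also have "\<dots> = (if ys \<in> {xs\<in>total_orders I. compatible I E h xs} then 1 else 0)"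
    by (subst sum.delta'[OF fin]) simp
  finally show ?thesis by simp
qed

lemma gamma_part:
  assumes s: "shrub I E h" and s': "shrub I E' h'" and g: "gamma I E h = gamma I E' h'"
  shows "E = E' \<and> (\<forall>i\<in>I. h i = h' i)"
proof (rule part1[OF s s'], intro allI impI)
  fix xs assume xs: "distinct xs \<and> set xs = I"
  then have T: "xs \<in> total_orders I" by (simp add: total_orders_def)
  have f: "finite I" using s shrub_finite by blast
  have "compatible I E h xs \<longleftrightarrow> compatible I E' h' xs"
    using fun_cong[OF g, of xs] gamma_apply[OF f] T by (metis one_neq_zero)
  then show "pc E h xs \<longleftrightarrow> pc E' h' xs" using compat_iff xs by metis
qed



lemma ord_le_refl: "i \<in> set xs \<Longrightarrow> ord_le xs i i"
proof -
  assume "i \<in> set xs"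
  then obtain p where "p < length xs" "xs!p = i" by (metis in_set_conv_nth)
  then show ?thesis unfolding ord_le_def by blast
qed

lemma ord_le_last: "i \<in> set xs \<Longrightarrow> ord_le xs i (last xs)"
proof -
  assume "i \<in> set xs"
  then obtain p where p: "p < length xs" "xs!p = i" by (metis in_set_conv_nth)
  then have "xs \<noteq> []" by auto
  then have "last xs = xs ! (length xs - 1)" by (simp add: last_conv_nth)
  then show ?thesis unfolding ord_le_def using p by (intro exI[of _ p] exI[of _ "length xs - 1"]) auto
qed

lemma ord_le_snoc:
  assumes d: "distinct (s@[b])" and i: "i \<in> set s" and j: "j \<in> set s"
  shows "ord_le (s@[b]) i j \<longleftrightarrow> ord_le s i j"
proof
  assume "ord_le (s@[b]) i j"
  then obtain p q where pq: "p \<le> q" "q < length (s@[b])" "(s@[b])!p = i" "(s@[b])!q = j" unfolding ord_le_def by blast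
  have "q \<noteq> length s" using pq d j by auto
  then have "q < length s" using pq by simp
  then show "ord_le s i j" unfolding ord_le_def using pq by (intro exI[of _ p] exI[of _ q]) (auto simp: nth_append)
next
  assume "ord_le s i j"
  then obtain p q where pq: "p \<le> q" "q < length s" "s!p = i" "s!q = j" unfolding ord_le_def by blast
  then show "ord_le (s@[b]) i j" unfolding ord_le_def by (intro exI[of _ p] exI[of _ q]) (auto simp: nth_append)
qed

lemma ord_le_snoc_last:
  assumes d: "distinct (s@[b])"
  shows "ord_le (s@[b]) b j \<longleftrightarrow> j = b"
proof
  assume "ord_le (s@[b]) b j"
  then obtain p q where pq: "p \<le> q" "q < length (s@[b])" "(s@[b])!p = b" "(s@[b])!q = j" unfolding ord_le_def by blast
  have "(s@[b]) ! length s = b" by simp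
  moreover have "p < length (s@[b])" using pq by linarith
  moreover have "length s < length (s@[b])" by simp
  ultimately have "p = length s" using pq(3) d nth_eq_iff_index_eq by metis
  then have "q = length s" using pq by simp
  then show "j = b" using pq by simp
next
  assume "j = b"
  then show "ord_le (s@[b]) b j" by (simp add: ord_le_refl)
qed

definition iota_r :: "'a set \<Rightarrow> 'a list \<Rightarrow> ('a \<Rightarrow> real) \<Rightarrow> real" where
  "iota_r I xs v = 1 / (\<Prod>i\<in>I. \<Sum>j\<in>{j\<in>I. ord_le xs i j}. v j)"

lemma of_rat_iota: "real_of_rat (iota_basis I xs u) = iota_r I xs (\<lambda>j. real_of_rat (u j))"
  by (simp add: iota_basis_def iota_r_def of_rat_divide of_rat_prod of_rat_sum)

lemma T_snoc:
  assumes b: "b \<in> I"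
  shows "{p \<in> total_orders I. last p = b} = (\<lambda>s. s@[b]) ` total_orders (I - {b})"
proof (intro equalityI subsetI)
  fix p assume p: "p \<in> {p \<in> total_orders I. last p = b}"
  then have d: "distinct p" "set p = I" "last p = b" by (auto simp: total_orders_def)
  then have ne: "p \<noteq> []" using b by auto
  then obtain q where eq: "p = q @ [b]" using d(3) by (metis append_butlast_last_id)
  then have nb: "b \<notin> set q" "distinct q" using d(1) by auto
  then have "set q = I - {b}" using d(2) eq by auto
  then show "p \<in> (\<lambda>s. s@[b]) ` total_orders (I - {b})" using eq nb unfolding total_orders_def
    by blast
next
  fix p assume "p \<in> (\<lambda>s. s@[b]) ` total_orders (I - {b})"
  then obtain s where s: "distinct s" "set s = I - {b}" "p = s@[b]" unfolding total_orders_def by blast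
  then have "distinct p" "set p = I" "last p = b" using b by auto
  then show "p \<in> {p \<in> total_orders I. last p = b}" unfolding total_orders_def by blast
qed



lemma key:
  fixes c :: "'a list \<Rightarrow> rat" and u :: "'a \<Rightarrow> rat"
  assumes fin: "finite I" and b: "b \<in> I"
    and hyp: "\<forall>u. (\<forall>i\<in>I. 0 < u i) \<longrightarrow> (\<Sum>p\<in>total_orders I. c p * iota_basis I p u) = 0"
    and upos: "\<forall>i\<in>I - {b}. 0 < u i"
  shows "(\<Sum>s\<in>total_orders (I - {b}). c (s@[b]) * iota_basis (I - {b}) s u) = 0"
proof -
  define I' where "I' = I - {b}"
  define v :: "real \<Rightarrow> 'a \<Rightarrow> real" where "v t = (\<lambda>j. real_of_rat (u j))(b := t)" for t
  define S where "S p i = {j\<in>I. ord_le p i j}" for p i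
  define P where "P p t = (\<Prod>i\<in>I. \<Sum>j\<in>S p i. v t j)" for p t
  define Q where "Q p t = (\<Prod>i\<in>I'. \<Sum>j\<in>S p i. v t j)" for p t
  define H where "H p t = (if last p = b then 1 / Q p t else t / P p t)" for p t
  define G where "G t = (\<Sum>p\<in>total_orders I. real_of_rat (c p) * H p t)" for t
  have finT: "finite (total_orders I)" using finite_T[OF fin] .
  have Tf: "distinct p" "set p = I" "p \<noteq> []" if "p \<in> total_orders I" for p
    using that b by (auto simp: total_orders_def)
  have finS: "finite (S p i)" for p i using fin unfolding S_def by simp
  have vj: "v t j = real_of_rat (u j)" if "j \<noteq> b" for t j using that by (simp add: v_def)
  have vb: "v t b = t" for t by (simp add: v_def)
  have v0nn: "0 \<le> v 0 j" if "j \<in> I" for j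
    using that upos vj vb by (cases "j = b") (auto intro: less_imp_le)
  have v0pos: "0 < v 0 j" if "j \<in> I'" for j
    using that upos vj by (auto simp: I'_def)
  have H_eq: "t * iota_r I p (v t) = H p t" if p: "p \<in> total_orders I" and t: "t \<noteq> 0" for p t
  proof (cases "last p = b")
    case True
    obtain q where q: "p = q @ [b]" using Tf[OF p] True by (metis append_butlast_last_id)
    have "S p b = {b}"
      unfolding S_def q using ord_le_snoc_last[of q b] Tf[OF p] q b by auto
    then have Pq: "P p t = t * Q p t"
      unfolding P_def Q_def I'_def using prod.remove[OF fin b, of "\<lambda>i. \<Sum>j\<in>S p i. v t j"] vb by simp
    have "t * iota_r I p (v t) = t * (1 / P p t)"
      unfolding iota_r_def P_def S_def by simp
    also have "\<dots> = 1 / Q p t" using Pq t by simp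
    finally show ?thesis unfolding H_def using True by simp
  next
    case False
    have "t * iota_r I p (v t) = t * (1 / P p t)"
      unfolding iota_r_def P_def S_def by simp
    then show ?thesis unfolding H_def using False by simp
  qed
  have vcont: "isCont (\<lambda>t. v t j) 0" for j
    by (cases "j = b") (simp_all add: vb vj)
  have sumcont: "isCont (\<lambda>t. \<Sum>j\<in>S p i. v t j) 0" for p i
    using vcont by simp
  have Pcont: "isCont (P p) 0" for p
    unfolding P_def by (intro continuous_prod sumcont)
  have Qcont: "isCont (Q p) 0" for p
    unfolding Q_def by (intro continuous_prod sumcont)
  have Hcont: "isCont (H p) 0" if p: "p \<in> total_orders I" for p
  proof (cases "last p = b")
    case True
    have "0 < Q p 0" unfolding Q_def
    proof (rule prod_pos)
      fix i assume i: "i \<in> I'"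
      then have "i \<in> S p i" unfolding S_def I'_def using Tf[OF p] ord_le_refl by auto
      moreover have "S p i \<subseteq> I" unfolding S_def by auto
      ultimately show "0 < (\<Sum>j\<in>S p i. v 0 j)"
        using sum_pos2[where I="S p i" and i=i and f="v 0", OF finS] v0pos[OF i] v0nn by blast
    qed
    then have "isCont (\<lambda>t. 1 / Q p t) 0" using Qcont by (intro isCont_divide) auto
    then show ?thesis unfolding H_def using True by simp
  next
    case False
    have "0 < P p 0" unfolding P_def
    proof (rule prod_pos)
      fix i assume i: "i \<in> I"
      have sub: "S p i \<subseteq> I" unfolding S_def by auto
      show "0 < (\<Sum>j\<in>S p i. v 0 j)"
      proof (cases "i = b")
        case True
        have lI: "last p \<in> I" using Tf[OF p] by auto
        have "last p \<in> S p i" unfolding S_def using Tf[OF p] ord_le_last i lI by auto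
        moreover have "0 < v 0 (last p)" using v0pos lI False by (auto simp: I'_def)
        ultimately show ?thesis using sum_pos2[where I="S p i" and i="last p" and f="v 0", OF finS] v0nn sub by blast
      next
        case False
        have "i \<in> S p i" unfolding S_def using Tf[OF p] ord_le_refl i by auto
        moreover have "0 < v 0 i" using v0pos i False by (auto simp: I'_def)
        ultimately show ?thesis using sum_pos2[where I="S p i" and i=i and f="v 0", OF finS] v0nn sub by blast
      qed
    qed
    then have "isCont (\<lambda>t. t / P p t) 0" using Pcont by (intro isCont_divide) auto
    then show ?thesis unfolding H_def using False by simp
  qed
  have Gcont: "isCont G 0" unfolding G_def
    using Hcont by (intro isCont_sum ballI isCont_mult) auto
  have H0: "H p 0 = (if last p = b then real_of_rat (iota_basis I' (butlast p) u) else 0)"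
    if p: "p \<in> total_orders I" for p
  proof (cases "last p = b")
    case True
    obtain q where q: "p = q @ [b]" using Tf[OF p] True by (metis append_butlast_last_id)
    have dq: "distinct (q@[b])" "set q = I'" using Tf[OF p] q by (auto simp: I'_def)
    have "(\<Sum>j\<in>S p i. v 0 j) = (\<Sum>j\<in>{j\<in>I'. ord_le q i j}. real_of_rat (u j))" if i: "i \<in> I'" for i
    proof -
      have sub: "{j\<in>I'. ord_le q i j} \<subseteq> S p i"
        unfolding S_def q I'_def using ord_le_snoc[OF dq(1)] dq(2) i by (auto simp: I'_def)
      have "(\<Sum>j\<in>S p i. v 0 j) = (\<Sum>j\<in>{j\<in>I'. ord_le q i j}. v 0 j)"
      proof (rule sum.mono_neutral_right[OF finS sub], rule ballI)
        fix j assume "j \<in> S p i - {j\<in>I'. ord_le q i j}"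
        then have "j \<in> I" "ord_le p i j" "j \<notin> I' \<or> \<not> ord_le q i j" unfolding S_def by auto
        then have "j = b" using ord_le_snoc[OF dq(1)] dq(2) i q by (auto simp: I'_def)
        then show "v 0 j = 0" by (simp add: vb)
      qed
      also have "\<dots> = (\<Sum>j\<in>{j\<in>I'. ord_le q i j}. real_of_rat (u j))"
        by (rule sum.cong) (auto simp: vj I'_def)
      finally show ?thesis .
    qed
    then have "Q p 0 = (\<Prod>i\<in>I'. \<Sum>j\<in>{j\<in>I'. ord_le q i j}. real_of_rat (u j))"
      unfolding Q_def by (rule prod.cong[OF refl])
    then have "H p 0 = iota_r I' q (\<lambda>j. real_of_rat (u j))"
      unfolding H_def iota_r_def using True by simp
    then show ?thesis using True q by (simp add: of_rat_iota)
  next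
    case False
    then show ?thesis unfolding H_def by simp
  qed
  have G0: "G 0 = real_of_rat (\<Sum>s\<in>total_orders I'. c (s@[b]) * iota_basis I' s u)"
  proof -
    have "G 0 = (\<Sum>p\<in>total_orders I. if last p = b then real_of_rat (c p) * real_of_rat (iota_basis I' (butlast p) u) else 0)"
      unfolding G_def by (rule sum.cong[OF refl]) (simp add: H0)
    also have "\<dots> = (\<Sum>p\<in>{p\<in>total_orders I. last p = b}. real_of_rat (c p) * real_of_rat (iota_basis I' (butlast p) u))"
      by (rule sum.inter_filter[OF finT, symmetric])
    also have "\<dots> = (\<Sum>p\<in>(\<lambda>s. s@[b]) ` total_orders I'. real_of_rat (c p) * real_of_rat (iota_basis I' (butlast p) u))"
      using T_snoc[OF b] by (simp add: I'_def)
    also have "\<dots> = (\<Sum>s\<in>total_orders I'. real_of_rat (c (s@[b])) * real_of_rat (iota_basis I' s u))"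
      by (subst sum.reindex) (auto simp: inj_on_def)
    finally show ?thesis by (simp add: of_rat_sum of_rat_mult)
  qed
  define r :: "nat \<Rightarrow> rat" where "r n = 1 / (of_nat n + 1)" for n
  have rpos: "0 < r n" for n unfolding r_def by simp
  have rr: "real_of_rat (r n) = inverse (real (Suc n))" for n
    unfolding r_def by (simp add: of_rat_divide of_rat_add field_simps)
  have Gr: "G (real_of_rat (r n)) = 0" for n
  proof -
    define t where "t = real_of_rat (r n)"
    have t0: "t \<noteq> 0" using rpos[of n] unfolding t_def by simp
    have vt: "v t = (\<lambda>j. real_of_rat ((u(b := r n)) j))" unfolding v_def t_def by auto
    have "G t = (\<Sum>p\<in>total_orders I. real_of_rat (c p) * (t * iota_r I p (v t)))"
      unfolding G_def by (rule sum.cong[OF refl]) (simp add: H_eq t0)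
    also have "\<dots> = t * (\<Sum>p\<in>total_orders I. real_of_rat (c p) * real_of_rat (iota_basis I p (u(b := r n))))"
      unfolding vt of_rat_iota[symmetric] by (simp add: sum_distrib_left mult_ac fun_upd_def)
    also have "\<dots> = t * real_of_rat (\<Sum>p\<in>total_orders I. c p * iota_basis I p (u(b := r n)))"
      by (simp add: of_rat_sum of_rat_mult)
    also have "(\<Sum>p\<in>total_orders I. c p * iota_basis I p (u(b := r n))) = 0"
      using hyp upos rpos[of n] by (intro hyp[rule_format]) auto
    finally show ?thesis unfolding t_def by simp
  qed
  have lim0: "(\<lambda>n. real_of_rat (r n)) \<longlonglongrightarrow> 0"
    unfolding rr by (rule LIMSEQ_inverse_real_of_nat)
  have "(\<lambda>n. G (real_of_rat (r n))) \<longlonglongrightarrow> G 0"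
    by (rule isCont_tendsto_compose[OF Gcont lim0])
  then have "G 0 = 0" unfolding Gr by (simp add: LIMSEQ_const_iff)
  then show ?thesis unfolding G0 I'_def by simp
qed



lemma indep:
  fixes c :: "'a list \<Rightarrow> rat"
  shows "finite I \<Longrightarrow> (\<forall>u. (\<forall>i\<in>I. 0 < u i) \<longrightarrow> (\<Sum>p\<in>total_orders I. c p * iota_basis I p u) = 0)
    \<Longrightarrow> p \<in> total_orders I \<Longrightarrow> c p = 0"
proof (induction "card I" arbitrary: I c p rule: less_induct)
  case less
  show ?case
  proof (cases "I = {}")
    case True
    then have T: "total_orders I = {[]}" by (auto simp: total_orders_def)
    then have "p = []" using less.prems by simp
    moreover have "c [] * iota_basis I [] (\<lambda>_. 1) = 0" using less.prems(2) T by auto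
    moreover have "iota_basis I [] (\<lambda>_. 1) = 1" using True by (simp add: iota_basis_def)
    ultimately show ?thesis by simp
  next
    case False
    have d: "distinct p" "set p = I" using less.prems by (auto simp: total_orders_def)
    then have "p \<noteq> []" using False by auto
    then obtain q b where q: "p = q @ [b]" by (metis append_butlast_last_id)
    have b: "b \<in> I" using d q by auto
    have qT: "q \<in> total_orders (I - {b})" using d q by (auto simp: total_orders_def)
    have hyp': "\<forall>u. (\<forall>i\<in>I - {b}. 0 < u i) \<longrightarrow>
        (\<Sum>s\<in>total_orders (I - {b}). c (s@[b]) * iota_basis (I - {b}) s u) = 0"
      using key[OF less.prems(1) b less.prems(2)] by blast
    have "card (I - {b}) < card I" using b less.prems(1) by (meson card_Diff1_less)
    then have "(\<lambda>s. c (s@[b])) q = 0"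
      using less.hyps[OF _ _ hyp' qT] less.prems(1) by blast
    then show ?thesis using q by simp
  qed
qed


theorem mainTheorem15:
  assumes "shrub I E h" and "shrub I E' h'"
  shows "(gamma I E h = gamma I E' h' \<longrightarrow> E = E' \<and> (\<forall>i\<in>I. h i = h' i))
       \<and> ((\<forall>u. (\<forall>i\<in>I. 0 < u i) \<longrightarrow> kappa I E h u = kappa I E' h' u)
            \<longrightarrow> E = E' \<and> (\<forall>i\<in>I. h i = h' i))"
proof (rule conjI)
  show "gamma I E h = gamma I E' h' \<longrightarrow> E = E' \<and> (\<forall>i\<in>I. h i = h' i)"
    using gamma_part[OF assms] by blast
next
  show "(\<forall>u. (\<forall>i\<in>I. 0 < u i) \<longrightarrow> kappa I E h u = kappa I E' h' u)
            \<longrightarrow> E = E' \<and> (\<forall>i\<in>I. h i = h' i)"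
  proof
  assume K: "\<forall>u. (\<forall>i\<in>I. 0 < u i) \<longrightarrow> kappa I E h u = kappa I E' h' u"
  have f: "finite I" using assms(1) shrub_finite by blast
  define c where "c p = gamma I E h p - gamma I E' h' p" for p
  have hyp: "\<forall>u. (\<forall>i\<in>I. 0 < u i) \<longrightarrow> (\<Sum>p\<in>total_orders I. c p * iota_basis I p u) = 0"
  proof (intro allI impI)
    fix u :: "'a \<Rightarrow> rat" assume "\<forall>i\<in>I. 0 < u i"
    then have "kappa I E h u = kappa I E' h' u" using K by blast
    then show "(\<Sum>p\<in>total_orders I. c p * iota_basis I p u) = 0"
      unfolding kappa_def iota_def c_def by (simp add: left_diff_distrib sum_subtractf)
  qed
  have "gamma I E h = gamma I E' h'"
  proof
    fix p
    show "gamma I E h p = gamma I E' h' p"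
    proof (cases "p \<in> total_orders I")
      case True
      then show ?thesis using indep[OF f hyp True] unfolding c_def by simp
    next
      case False
      then show ?thesis using gamma_apply[OF f] by simp
    qed
  qed
  then show "E = E' \<and> (\<forall>i\<in>I. h i = h' i)" using gamma_part[OF assms] by blast
  qed
qed

end
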